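(* Let $A,A'$ be alphabets with $A\subset A'$, and let $\mathbf a,\mathbf a'$ be weights with $\mathbf a'|_A=\mathbf a|_A$. Then the map $\Phi:\mathbb T^{A,\mathbf a}\to\mathbb T^{A',\mathbf a'}$, $\Phi([w])=[w]$ (for $w\in A^{\mathbb N}\subset(A')^{\mathbb N}$), is an isometric embedding. Moreover, if $A\subsetneq A'$, then $$\mathrm{dist}_H\big(\Phi(\mathbb T^{A,\mathbf a}),\mathbb T^{A',\mathbf a'}\big)\le\max_{j\in A'\setminus A}\mathbf a'(j).$$
   Context: An alphabet is $\mathbb N$ or $\{1,\dots,M\}$, $M\ge2$. For an alphabet $A$: $A^k$ words of length $k$ ($A^0=\{\varepsilon\}$), $A^*=\bigcup_kA^k$, $A^{\mathbb N}$ infinite words; $A^n_u$, $A^{\mathbb N}_u$: words beginning with $u\in A^*$; $w(n)$: length-$n$ prefix; $i^{(k)}$: $k$ copies of $i$. Graphs $G^A_k=(A^k,E^A_k)$: $E^A_1=\{\{1,i\}:i\in A\setminus\{1\}\}$, $E^A_{k+1}=\{\{12^{(k)},i1^{(k)}\}:i\in A\setminus\{1\}\}\cup\{\{iw,iu\}:i\in A,\{w,u\}\in E^A_k\}$. $A^{\mathbb N}_{u_1}\wedge A^{\mathbb N}_{u_2}$: the $w\in A^{\mathbb N}_{u_1}$ such that for every $n>\max\{|u_1|,|u_2|\}$ some $u\in A^n_{u_2}$ has $\{w(n),u\}\in E^A_n$, together with the symmetric set. Chain joining $w,w'$: list $A^{\mathbb N}_{v_1},\dots,A^{\mathbb N}_{v_N}$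 with $w\in A^{\mathbb N}_{v_1}$, $w'\in A^{\mathbb N}_{v_N}$, consecutive $\wedge$ nonempty. Weight: non-increasing $\mathbf a:\mathbb N\to(0,1/2]$, $\mathbf a(1)=\mathbf a(2)=1/2$, $\mathbf a(i)\to0$; $\Delta_{\mathbf a}(i_1\cdots i_k)=\prod\mathbf a(i_j)$, $\Delta_{\mathbf a}(\varepsilon)=1$. $\rho_{A,\mathbf a}(w,u)=\inf\sum_{i=1}^N\Delta_{\mathbf a}(v_i)$ over chains joining $w,u$; $\mathbb T^{A,\mathbf a}=A^{\mathbb N}/\{\rho_{A,\mathbf a}=0\}$ with metric $d_{A,\mathbf a}([w],[u])=\rho_{A,\mathbf a}(w,u)$. $\mathrm{dist}_H$ is the Hausdorff distance between subsets of $\mathbb T^{A',\mathbf a'}$. *)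

theory Defs
  imports Complex_Main
begin

definition alphabet :: "nat set \<Rightarrow> bool" where
  "alphabet A \<longleftrightarrow> A = {1..} \<or> (\<exists>M\<ge>2. A = {1..M})"

text \<open>Weights: non-increasing maps from the positive naturals into (0,1/2],
  a(1) = a(2) = 1/2, tending to 0 (the value at 0 is irrelevant).\<close>
definition weight :: "(nat \<Rightarrow> real) \<Rightarrow> bool" where
  "weight a \<longleftrightarrow> (\<forall>i j. 1 \<le> i \<longrightarrow> i \<le> j \<longrightarrow> a j \<le> a i)
     \<and> (\<forall>i\<ge>1. 0 < a i \<and> a i \<le> 1/2) \<and> a 1 = 1/2 \<and> a 2 = 1/2
     \<and> (a \<longlonglongrightarrow> 0)"

definition infwords :: "nat set \<Rightarrow> (nat \<Rightarrow> nat) set" where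
  "infwords A = {w. \<forall>n. w n \<in> A}"

definition pref :: "(nat \<Rightarrow> nat) \<Rightarrow> nat \<Rightarrow> nat list" where
  "pref w n = map w [0..<n]"

definition cyl :: "nat set \<Rightarrow> nat list \<Rightarrow> (nat \<Rightarrow> nat) set" where
  "cyl A u = {w \<in> infwords A. pref w (length u) = u}"

fun E :: "nat set \<Rightarrow> nat \<Rightarrow> nat list set set" where
  "E A 0 = {}"
| "E A (Suc 0) = {{[1], [i]} | i. i \<in> A - {1}}"
| "E A (Suc (Suc k)) =
     {{1 # replicate (Suc k) 2, i # replicate (Suc k) 1} | i. i \<in> A - {1}}
     \<union> {{i # w, i # u} | i w u. i \<in> A \<and> {w, u} \<in> E A (Suc k)}"

definition wedge :: "nat set \<Rightarrow> nat list \<Rightarrow> nat list \<Rightarrow> (nat \<Rightarrow> nat) set" where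
  "wedge A u1 u2 =
     {w \<in> cyl A u1. \<forall>n > max (length u1) (length u2). \<exists>u. set u \<subseteq> A \<and> length u = n
          \<and> take (length u2) u = u2 \<and> {pref w n, u} \<in> E A n}
   \<union> {w \<in> cyl A u2. \<forall>n > max (length u1) (length u2). \<exists>u. set u \<subseteq> A \<and> length u = n
          \<and> take (length u1) u = u1 \<and> {pref w n, u} \<in> E A n}"

definition chain :: "nat set \<Rightarrow> (nat \<Rightarrow> nat) \<Rightarrow> (nat \<Rightarrow> nat) \<Rightarrow> nat list list \<Rightarrow> bool" where
  "chain A w w' vs \<longleftrightarrow> vs \<noteq> [] \<and> (\<forall>v\<in>set vs. set v \<subseteq> A)
     \<and> w \<in> cyl A (hd vs) \<and> w' \<in> cyl A (last vs)
     \<and> (\<forall>i. Suc i < length vs \<longrightarrow> wedge A (vs ! i) (vs ! Suc i) \<noteq> {})"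

definition Delta :: "(nat \<Rightarrow> real) \<Rightarrow> nat list \<Rightarrow> real" where
  "Delta a v = prod_list (map a v)"

definition rho :: "nat set \<Rightarrow> (nat \<Rightarrow> real) \<Rightarrow> (nat \<Rightarrow> nat) \<Rightarrow> (nat \<Rightarrow> nat) \<Rightarrow> real" where
  "rho A a w u = Inf {sum_list (map (Delta a) vs) | vs. chain A w u vs}"

definition cls :: "nat set \<Rightarrow> (nat \<Rightarrow> real) \<Rightarrow> (nat \<Rightarrow> nat) \<Rightarrow> (nat \<Rightarrow> nat) set" where
  "cls A a w = {u \<in> infwords A. rho A a w u = 0}"

definition T :: "nat set \<Rightarrow> (nat \<Rightarrow> real) \<Rightarrow> (nat \<Rightarrow> nat) set set" where
  "T A a = cls A a ` infwords A"

definition dT :: "nat set \<Rightarrow> (nat \<Rightarrow> real) \<Rightarrow> (nat \<Rightarrow> nat) set \<Rightarrow> (nat \<Rightarrow> nat) set \<Rightarrow> real" where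
  "dT A a C D = rho A a (SOME w. w \<in> C) (SOME u. u \<in> D)"

text \<open>Phi([w]) = [w]' : the union of the A'-classes of the members of C
  (this is a single A'-class exactly when Phi is well defined on C).\<close>
definition Phi :: "nat set \<Rightarrow> (nat \<Rightarrow> real) \<Rightarrow> (nat \<Rightarrow> nat) set \<Rightarrow> (nat \<Rightarrow> nat) set" where
  "Phi A' a' C = (\<Union>w\<in>C. cls A' a' w)"

definition hausdist_on :: "('x \<Rightarrow> 'x \<Rightarrow> real) \<Rightarrow> 'x set \<Rightarrow> 'x set \<Rightarrow> real" where
  "hausdist_on d X Y = max (SUP x\<in>X. INF y\<in>Y. d x y) (SUP y\<in>Y. INF x\<in>X. d x y)"

end

theory Submission
  imports Defs
begin

lemma alphabet_12: "alphabet A \<Longrightarrow> 1 \<in> A \<and> 2 \<in> A"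
  unfolding alphabet_def by auto

lemma alphabet_pos: "alphabet A \<Longrightarrow> i \<in> A \<Longrightarrow> 1 \<le> i"
  unfolding alphabet_def by auto

lemma weight_pos: "weight a \<Longrightarrow> 1 \<le> i \<Longrightarrow> 0 < a i"
  unfolding weight_def by auto

lemma weight_le: "weight a \<Longrightarrow> 1 \<le> i \<Longrightarrow> a i \<le> 1/2"
  unfolding weight_def by auto

lemma Delta_Nil[simp]: "Delta a [] = 1" by (simp add: Delta_def)
lemma Delta_Cons[simp]: "Delta a (c # v) = a c * Delta a v" by (simp add: Delta_def)

lemma Delta_bounds:
  assumes "alphabet A" "weight a" "set v \<subseteq> A"
  shows "0 \<le> Delta a v \<and> Delta a v \<le> (1/2) ^ length v"
  using assms(3)
proof (induction v)
  case Nil then show ?case by simp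
next
  case (Cons c v)
  have c: "0 < a c" "a c \<le> 1/2" using Cons.prems assms weight_pos weight_le alphabet_pos by auto
  have "a c * Delta a v \<le> (1/2) * (1/2)^length v"
    using Cons c by (intro mult_mono) auto
  then show ?case using Cons c by auto
qed

lemma E_intro:
  assumes "set r \<subseteq> A" "i \<in> A" "i \<noteq> 1"
  shows "{r @ 1 # replicate m 2, r @ i # replicate m 1} \<in> E A (length r + 1 + m)"
  using assms(1)
proof (induction r)
  case Nil then show ?case using assms by (cases m) auto
next
  case (Cons c r)
  have e: "length (c # r) + 1 + m = Suc (Suc (length r + m))" by simp
  have IH: "{r @ 1 # replicate m 2, r @ i # replicate m 1} \<in> E A (Suc (length r + m))"
    using Cons by simp
  show ?case unfolding e using IH Cons.prems by auto
qed

lemma E_elim0: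
  "{x, y} \<in> E A n \<Longrightarrow> \<exists>r i m. set r \<subseteq> A \<and> i \<in> A \<and> i \<noteq> 1 \<and>
     ((x = r @ 1 # replicate m 2 \<and> y = r @ i # replicate m 1) \<or>
      (x = r @ i # replicate m 1 \<and> y = r @ 1 # replicate m 2))"
proof (induction A n arbitrary: x y rule: E.induct)
  case (1 A) then show ?case by simp
next
  case (2 A)
  then obtain i where ii: "i \<in> A" "i \<noteq> 1" "{x, y} = {[1], [i]}" by auto
  show ?case
    apply (rule exI[of _ "[]"], rule exI[of _ i], rule exI[of _ 0])
    using ii by (auto simp: doubleton_eq_iff)
next
  case (3 A k)
  from "3.prems" consider
    (a) i where "i \<in> A - {1}" "{x, y} = {1 # replicate (Suc k) 2, i # replicate (Suc k) 1}"
  | (b) c w u where "{x, y} = {c # w, c # u}" "c \<in> A" "{w, u} \<in> E A (Suc k)"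
    by auto
  then show ?case
  proof cases
    case a show ?thesis
      apply (rule exI[of _ "[]"], rule exI[of _ i], rule exI[of _ "Suc k"])
      using a by (auto simp: doubleton_eq_iff)
  next
    case b
    from "3.IH"[OF b(3)] obtain r i m where
      rim: "set r \<subseteq> A" "i \<in> A" "i \<noteq> 1"
      "(w = r @ 1 # replicate m 2 \<and> u = r @ i # replicate m 1) \<or>
      (w = r @ i # replicate m 1 \<and> u = r @ 1 # replicate m 2)" by blast
    show ?thesis
      apply (rule exI[of _ "c # r"], rule exI[of _ i], rule exI[of _ m])
      using b(1,2) rim by (auto simp: doubleton_eq_iff)
  qed
qed


definition ext :: "nat list \<Rightarrow> nat \<Rightarrow> nat \<Rightarrow> nat \<Rightarrow> nat" where
  "ext r c t = (\<lambda>n. if n < length r then r ! n else if n = length r then c else t)"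

lemma pref_length[simp]: "length (pref w n) = n" by (simp add: pref_def)

lemma pref_nth: "p < n \<Longrightarrow> pref w n ! p = w p" by (simp add: pref_def)

lemma pref_take: "m \<le> n \<Longrightarrow> take m (pref w n) = pref w m"
  by (simp add: pref_def take_map)

lemma pref_eq_iff: "pref w n = pref z n \<longleftrightarrow> (\<forall>p<n. w p = z p)"
  by (auto simp: pref_def)

lemma pref_ext_short: "n \<le> length r \<Longrightarrow> pref (ext r c t) n = take n r"
  by (rule nth_equalityI) (auto simp: pref_nth ext_def)

lemma app_nth_ext: "p < length r + 1 + m \<Longrightarrow> (r @ c # replicate m t) ! p = ext r c t p"
  by (auto simp: ext_def nth_append nth_Cons split: nat.split)

lemma pref_ext: "pref (ext r c t) (length r + 1 + m) = r @ c # replicate m t"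
  by (rule nth_equalityI) (auto simp: pref_nth app_nth_ext)

lemma pref_ext_same[simp]: "pref (ext r c t) (length r) = r"
  by (simp add: pref_ext_short)

lemma ext_infwords: "set r \<subseteq> A \<Longrightarrow> c \<in> A \<Longrightarrow> t \<in> A \<Longrightarrow> ext r c t \<in> infwords A"
  by (auto simp: ext_def infwords_def)

lemma cyl_iff: "w \<in> cyl A v \<longleftrightarrow> w \<in> infwords A \<and> pref w (length v) = v"
  by (simp add: cyl_def)

lemma cyl_set: "w \<in> cyl A v \<Longrightarrow> set v \<subseteq> A"
proof -
  assume "w \<in> cyl A v"
  then have "v = map w [0..<length v]" "\<forall>n. w n \<in> A"
    by (auto simp: cyl_def infwords_def pref_def)
  then show ?thesis by (metis ex_map_conv subsetI)
qed

lemma infwords_pref: "w \<in> infwords A \<Longrightarrow> set (pref w n) \<subseteq> A"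
  by (auto simp: infwords_def pref_def)

definition Tch :: "nat set \<Rightarrow> (nat \<Rightarrow> nat) \<Rightarrow> (nat \<Rightarrow> nat) \<Rightarrow> bool" where
  "Tch A z1 z2 \<longleftrightarrow> z1 = z2 \<or> (\<exists>r i. set r \<subseteq> A \<and> i \<in> A \<and> i \<noteq> 1 \<and>
     ((z1 = ext r 1 2 \<and> z2 = ext r i 1) \<or> (z1 = ext r i 1 \<and> z2 = ext r 1 2)))"

lemma Tch_sym: "Tch A z1 z2 \<Longrightarrow> Tch A z2 z1"
  unfolding Tch_def by blast

lemma E_elim:
  assumes "alphabet A" "{x, y} \<in> E A n"
  shows "\<exists>r c t c2 t2 m. set r \<subseteq> A \<and> c \<in> A \<and> t \<in> A \<and> c2 \<in> A \<and> t2 \<in> A \<and>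
     x = r @ c # replicate m t \<and> y = r @ c2 # replicate m t2 \<and> Tch A (ext r c t) (ext r c2 t2)"
proof -
  obtain r i m where rim: "set r \<subseteq> A" "i \<in> A" "i \<noteq> 1"
     "(x = r @ 1 # replicate m 2 \<and> y = r @ i # replicate m 1) \<or>
      (x = r @ i # replicate m 1 \<and> y = r @ 1 # replicate m 2)"
    using E_elim0[OF assms(2)] by blast
  have 12: "1 \<in> A" "2 \<in> A" using alphabet_12[OF assms(1)] by auto
  from rim(4) show ?thesis
  proof
    assume h: "x = r @ 1 # replicate m 2 \<and> y = r @ i # replicate m 1"
    have "Tch A (ext r 1 2) (ext r i 1)" unfolding Tch_def using rim by blast
    then show ?thesis using h rim 12 by blast
  next
    assume h: "x = r @ i # replicate m 1 \<and> y = r @ 1 # replicate m 2"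
    have "Tch A (ext r i 1) (ext r 1 2)" unfolding Tch_def using rim by blast
    then show ?thesis using h rim 12 by blast
  qed
qed

lemma wedge_sym: "wedge A u1 u2 = wedge A u2 u1"
  unfolding wedge_def by (auto simp: max.commute)

lemma wedge_same_aux:
  assumes "alphabet A" "z \<in> cyl A v1" "z \<in> cyl A v2" "length v1 \<le> length v2"
  shows "wedge A v1 v2 \<noteq> {}"
proof -
  have 12: "1 \<in> A" "2 \<in> A" using alphabet_12[OF assms(1)] by auto
  have v2A: "set v2 \<subseteq> A" using cyl_set[OF assms(3)] .
  define w where "w = ext v2 1 2"
  have wA: "w \<in> infwords A" unfolding w_def using ext_infwords v2A 12 by blast
  have "take (length v1) v2 = v1"
    using assms(2,3,4) pref_take[of "length v1" "length v2" z] by (simp add: cyl_iff)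
  then have "w \<in> cyl A v1" using wA assms(4) by (simp add: cyl_iff w_def pref_ext_short)
  moreover have "\<forall>n > max (length v1) (length v2). \<exists>u. set u \<subseteq> A \<and> length u = n
          \<and> take (length v2) u = v2 \<and> {pref w n, u} \<in> E A n"
  proof (intro allI impI)
    fix n assume n: "n > max (length v1) (length v2)"
    define m where "m = n - length v2 - 1"
    have nn: "n = length v2 + 1 + m" using n m_def by auto
    have "{v2 @ 1 # replicate m 2, v2 @ 2 # replicate m 1} \<in> E A n"
      unfolding nn by (rule E_intro) (use v2A 12 in auto)
    moreover have "pref w n = v2 @ 1 # replicate m 2" unfolding nn w_def by (rule pref_ext)
    ultimately show "\<exists>u. set u \<subseteq> A \<and> length u = n
          \<and> take (length v2) u = v2 \<and> {pref w n, u} \<in> E A n"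
      using v2A 12 nn by (intro exI[of _ "v2 @ 2 # replicate m 1"]) auto
  qed
  ultimately have "w \<in> wedge A v1 v2" unfolding wedge_def by blast
  then show ?thesis by blast
qed

lemma wedge_same:
  assumes "alphabet A" "z \<in> cyl A v1" "z \<in> cyl A v2"
  shows "wedge A v1 v2 \<noteq> {}"
proof (cases "length v1 \<le> length v2")
  case True then show ?thesis using wedge_same_aux assms by blast
next
  case False then show ?thesis using wedge_same_aux[of A z v2 v1] assms wedge_sym by auto
qed

lemma wedge_edge_aux:
  assumes "alphabet A" "set r \<subseteq> A" "i \<in> A" "i \<noteq> 1"
    "ext r 1 2 \<in> cyl A v1" "ext r i 1 \<in> cyl A v2"
  shows "wedge A v1 v2 \<noteq> {}"
proof (cases "length v1 \<le> length r \<and> length v2 \<le> length r")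
  case True
  have "pref (ext r 1 2) (length v2) = pref (ext r i 1) (length v2)"
    using True by (simp add: pref_ext_short)
  then have "ext r 1 2 \<in> cyl A v2" using assms(5,6) by (simp add: cyl_iff)
  then show ?thesis using wedge_same assms by blast
next
  case False
  have 12: "1 \<in> A" "2 \<in> A" using alphabet_12[OF assms(1)] by auto
  define w where "w = ext r 1 2"
  have "\<forall>n > max (length v1) (length v2). \<exists>u. set u \<subseteq> A \<and> length u = n
          \<and> take (length v2) u = v2 \<and> {pref w n, u} \<in> E A n"
  proof (intro allI impI)
    fix n assume n: "n > max (length v1) (length v2)"
    define m where "m = n - length r - 1"
    have nn: "n = length r + 1 + m" using n m_def False by auto
    have "{r @ 1 # replicate m 2, r @ i # replicate m 1} \<in> E A n"
      unfolding nn by (rule E_intro) (use assms in auto)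
    moreover have "pref w n = r @ 1 # replicate m 2" unfolding nn w_def by (rule pref_ext)
    moreover have "take (length v2) (r @ i # replicate m 1) = v2"
      using pref_take[of "length v2" n "ext r i 1"] assms(6) n pref_ext[of r i 1 m]
      by (simp add: cyl_iff nn)
    ultimately show "\<exists>u. set u \<subseteq> A \<and> length u = n
          \<and> take (length v2) u = v2 \<and> {pref w n, u} \<in> E A n"
      using assms 12 nn by (intro exI[of _ "r @ i # replicate m 1"]) auto
  qed
  then have "w \<in> wedge A v1 v2" unfolding wedge_def using assms(5) w_def by blast
  then show ?thesis by blast
qed

lemma touch_wedge:
  assumes "alphabet A" "z1 \<in> cyl A v1" "z2 \<in> cyl A v2" "Tch A z1 z2"
  shows "wedge A v1 v2 \<noteq> {}"
  using assms(4) unfolding Tch_def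
proof (elim disjE exE conjE)
  assume "z1 = z2" then show ?thesis using wedge_same assms by blast
next
  fix r i assume "set r \<subseteq> A" "i \<in> A" "i \<noteq> 1" "z1 = ext r 1 2" "z2 = ext r i 1"
  then show ?thesis using wedge_edge_aux assms by blast
next
  fix r i assume "set r \<subseteq> A" "i \<in> A" "i \<noteq> 1" "z1 = ext r i 1" "z2 = ext r 1 2"
  then show ?thesis using wedge_edge_aux[of A r i v2 v1] assms wedge_sym by auto
qed


lemma wedge_touch_aux:
  assumes A: "alphabet A" and w: "w \<in> cyl A v1" and L: "length v2 \<le> L"
    and H: "\<forall>n > L. \<exists>u. set u \<subseteq> A \<and> length u = n
          \<and> take (length v2) u = v2 \<and> {pref w n, u} \<in> E A n"
  shows "\<exists>z2. z2 \<in> cyl A v2 \<and> Tch A w z2"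
proof (cases "w \<in> cyl A v2")
  case True then show ?thesis unfolding Tch_def by blast
next
  case False
  have wA: "w \<in> infwords A" using w by (simp add: cyl_iff)
  have K: "\<exists>r c t c2 t2 m. set r \<subseteq> A \<and> c \<in> A \<and> t \<in> A \<and> c2 \<in> A \<and> t2 \<in> A \<and>
     pref w n = r @ c # replicate m t \<and> u = r @ c2 # replicate m t2 \<and> Tch A (ext r c t) (ext r c2 t2)
     \<and> length r < length v2"
    if n: "n > L" and u: "take (length v2) u = v2" "{pref w n, u} \<in> E A n" for n u
  proof -
    obtain r c t c2 t2 m where rr: "set r \<subseteq> A" "c \<in> A" "t \<in> A" "c2 \<in> A" "t2 \<in> A"
     "pref w n = r @ c # replicate m t" "u = r @ c2 # replicate m t2" "Tch A (ext r c t) (ext r c2 t2)"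
      using E_elim[OF A u(2)] by blast
    have "length r < length v2"
    proof (rule ccontr)
      assume "\<not> length r < length v2"
      then have "take (length v2) (pref w n) = take (length v2) u" using rr(6,7) by simp
      then have "pref w (length v2) = v2" using u(1) pref_take[of "length v2" n w] n L by simp
      then show False using False wA by (simp add: cyl_iff)
    qed
    then show ?thesis using rr by blast
  qed
  obtain u0 where u0: "set u0 \<subseteq> A" "length u0 = Suc L" "take (length v2) u0 = v2"
    "{pref w (Suc L), u0} \<in> E A (Suc L)" using H by blast
  obtain r c t c2 t2 m where rr: "set r \<subseteq> A" "c \<in> A" "t \<in> A" "c2 \<in> A" "t2 \<in> A"
     "pref w (Suc L) = r @ c # replicate m t" "u0 = r @ c2 # replicate m t2"
     "Tch A (ext r c t) (ext r c2 t2)" "length r < length v2"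
    using K[OF _ u0(3,4)] by blast
  have len: "Suc L = length r + 1 + m" using arg_cong[OF rr(6), of length] by simp
  have low: "w p = ext r c t p" if "p < Suc L" for p
    using pref_nth[OF that, of w] rr(6) app_nth_ext[of p r m c t] that len by simp
  have "w = ext r c t"
  proof
    fix p show "w p = ext r c t p"
    proof (cases "p < Suc L")
      case True then show ?thesis using low by blast
    next
      case False
      obtain u where u: "set u \<subseteq> A" "length u = Suc p" "take (length v2) u = v2"
        "{pref w (Suc p), u} \<in> E A (Suc p)" using H[rule_format, of "Suc p"] False by auto
      obtain r' c' t' c2' t2' m' where rr': 
        "pref w (Suc p) = r' @ c' # replicate m' t'" "length r' < length v2"
        using K[OF _ u(3,4)] False by (meson Suc_lessD not_less_eq)
      have len': "Suc p = length r' + 1 + m'" using arg_cong[OF rr'(1), of length] by simp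
      have "w p = ext r' c' t' p"
        using pref_nth[of p "Suc p" w] rr'(1) app_nth_ext[of p r' m' c' t'] len' by simp
      also have "\<dots> = t'" using rr'(2) L False by (simp add: ext_def)
      finally have wp: "w p = t'" .
      have "w L = ext r' c' t' L"
        using pref_nth[of L "Suc p" w] rr'(1) app_nth_ext[of L r' m' c' t'] len' False by simp
      also have "\<dots> = t'" using rr'(2) L by (simp add: ext_def)
      finally have "w L = t'" .
      moreover have "w L = t" using low[of L] rr(9) L by (simp add: ext_def)
      ultimately show ?thesis using wp False rr(9) L by (simp add: ext_def)
    qed
  qed
  moreover have "ext r c2 t2 \<in> cyl A v2"
  proof -
    have "pref (ext r c2 t2) (Suc L) = u0" using rr(7) len pref_ext by metis
    then have "pref (ext r c2 t2) (length v2) = v2"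
      using pref_take[of "length v2" "Suc L" "ext r c2 t2"] u0(3) L by simp
    then show ?thesis using ext_infwords rr by (simp add: cyl_iff)
  qed
  ultimately show ?thesis using rr(8) by blast
qed

lemma wedge_touch:
  assumes A: "alphabet A" and "wedge A v1 v2 \<noteq> {}"
  shows "\<exists>z1 z2. z1 \<in> cyl A v1 \<and> z2 \<in> cyl A v2 \<and> Tch A z1 z2"
proof -
  obtain w where "w \<in> wedge A v1 v2" using assms by blast
  then consider
    "w \<in> cyl A v1" "\<forall>n > max (length v1) (length v2). \<exists>u. set u \<subseteq> A \<and> length u = n
          \<and> take (length v2) u = v2 \<and> {pref w n, u} \<in> E A n"
  | "w \<in> cyl A v2" "\<forall>n > max (length v2) (length v1). \<exists>u. set u \<subseteq> A \<and> length u = n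
          \<and> take (length v1) u = v1 \<and> {pref w n, u} \<in> E A n"
    unfolding wedge_def by (auto simp: max.commute)
  then show ?thesis
  proof cases
    case 1
    then show ?thesis using wedge_touch_aux[OF A 1(1) _ 1(2)] by auto
  next
    case 2
    then obtain z where "z \<in> cyl A v1" "Tch A w z" using wedge_touch_aux[OF A 2(1) _ 2(2)] by auto
    then show ?thesis using 2 Tch_sym by blast
  qed
qed


definition cost :: "(nat \<Rightarrow> real) \<Rightarrow> nat list list \<Rightarrow> real" where
  "cost a vs = sum_list (map (Delta a) vs)"

lemma rho_cost: "rho A a w u = Inf {cost a vs | vs. chain A w u vs}"
  by (simp add: rho_def cost_def)

lemma chain_infwords: "chain A w u vs \<Longrightarrow> w \<in> infwords A \<and> u \<in> infwords A"
  by (simp add: chain_def cyl_iff)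

lemma cost_nonneg:
  assumes "alphabet A" "weight a" "\<forall>v\<in>set vs. set v \<subseteq> A"
  shows "0 \<le> cost a vs"
  unfolding cost_def using assms Delta_bounds by (auto intro!: sum_list_nonneg)

lemma chain_triv: "w \<in> infwords A \<Longrightarrow> u \<in> infwords A \<Longrightarrow> chain A w u [[]]"
  by (simp add: chain_def cyl_iff pref_def)

lemma rho_lower:
  assumes "alphabet A" "weight a" "chain A w u vs"
  shows "rho A a w u \<le> cost a vs"
  unfolding rho_cost
proof (rule cInf_lower)
  show "cost a vs \<in> {cost a vs |vs. chain A w u vs}" using assms by blast
  show "bdd_below {cost a vs |vs. chain A w u vs}"
    by (rule bdd_belowI[of _ 0]) (use assms cost_nonneg in \<open>auto simp: chain_def\<close>)
qed

lemma rho_greatest: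
  assumes "w \<in> infwords A" "u \<in> infwords A" "\<And>vs. chain A w u vs \<Longrightarrow> x \<le> cost a vs"
  shows "x \<le> rho A a w u"
  unfolding rho_cost
  by (rule cInf_greatest) (use assms chain_triv in blast)+

lemma rho_nonneg:
  assumes "alphabet A" "weight a" "w \<in> infwords A" "u \<in> infwords A"
  shows "0 \<le> rho A a w u"
  by (rule rho_greatest) (use assms cost_nonneg in \<open>auto simp: chain_def\<close>)

lemma rho_self:
  assumes A: "alphabet A" and a: "weight a" and w: "w \<in> infwords A"
  shows "rho A a w w = 0"
proof -
  have "rho A a w w \<le> e" if e: "e > 0" for e
  proof -
    obtain n where n: "(1/2::real)^n < e" using real_arch_pow_inv[OF e, of "1/2"] by auto
    have ch: "chain A w w [pref w n]" using w infwords_pref[OF w, of n] by (simp add: chain_def cyl_iff)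
    have "rho A a w w \<le> cost a [pref w n]" by (rule rho_lower[OF A a ch])
    also have "\<dots> \<le> (1/2)^n" using Delta_bounds[OF A a infwords_pref[OF w, of n]]
      by (simp add: cost_def)
    finally show ?thesis using n by simp
  qed
  then have "rho A a w w \<le> 0" by (meson dense not_le)
  then show ?thesis using rho_nonneg[OF A a w w] by simp
qed

lemma chain_rev:
  assumes "chain A w u vs" shows "chain A u w (rev vs)"
proof -
  have "wedge A (rev vs ! i) (rev vs ! Suc i) \<noteq> {}" if i: "Suc i < length vs" for i
  proof -
    define j where "j = length vs - 2 - i"
    have "rev vs ! i = vs ! Suc j" "rev vs ! Suc i = vs ! j" using i
      by (auto simp: rev_nth j_def Suc_diff_Suc numeral_2_eq_2)
    moreover have "wedge A (vs ! j) (vs ! Suc j) \<noteq> {}"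
      using assms i unfolding chain_def j_def by auto
    ultimately show ?thesis using wedge_sym by metis
  qed
  then show ?thesis using assms by (auto simp: chain_def hd_rev last_rev)
qed

lemma rho_sym_le:
  assumes "alphabet A" "weight a" "w \<in> infwords A" "u \<in> infwords A"
  shows "rho A a u w \<le> rho A a w u"
proof (rule rho_greatest[OF assms(3,4)])
  fix vs assume "chain A w u vs"
  then have "rho A a u w \<le> cost a (rev vs)" using rho_lower chain_rev assms by blast
  then show "rho A a u w \<le> cost a vs" by (simp add: cost_def rev_map[symmetric] sum_list_rev)
qed

lemma rho_sym:
  assumes "alphabet A" "weight a" "w \<in> infwords A" "u \<in> infwords A"
  shows "rho A a u w = rho A a w u"
  using rho_sym_le assms by (meson antisym)

lemma chain_app:
  assumes A: "alphabet A" and c1: "chain A w u vs1" and c2: "chain A u x vs2"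
  shows "chain A w x (vs1 @ vs2)"
proof -
  have ne: "vs1 \<noteq> []" "vs2 \<noteq> []" using c1 c2 by (auto simp: chain_def)
  have "wedge A ((vs1 @ vs2) ! i) ((vs1 @ vs2) ! Suc i) \<noteq> {}"
    if i: "Suc i < length (vs1 @ vs2)" for i
  proof -
    consider "Suc i < length vs1" | "Suc i = length vs1" | "Suc i > length vs1" by linarith
    then show ?thesis
    proof cases
      case 1 then show ?thesis using c1 by (simp add: chain_def nth_append)
    next
      case 2
      have "(vs1 @ vs2) ! i = last vs1" using 2 ne by (simp add: nth_append last_conv_nth flip: 2)
      moreover have "(vs1 @ vs2) ! Suc i = hd vs2" using 2 ne by (simp add: nth_append hd_conv_nth)
      moreover have "u \<in> cyl A (last vs1)" "u \<in> cyl A (hd vs2)" using c1 c2 by (auto simp: chain_def)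
      ultimately show ?thesis using wedge_same[OF A] by metis
    next
      case 3
      define j where "j = i - length vs1"
      have "(vs1 @ vs2) ! i = vs2 ! j" "(vs1 @ vs2) ! Suc i = vs2 ! Suc j" "Suc j < length vs2"
        using 3 i by (auto simp: nth_append j_def Suc_diff_le)
      then show ?thesis using c2 by (simp add: chain_def)
    qed
  qed
  then show ?thesis using c1 c2 ne by (auto simp: chain_def)
qed

lemma rho_triangle:
  assumes A: "alphabet A" and a: "weight a" and "w \<in> infwords A" "u \<in> infwords A" "x \<in> infwords A"
  shows "rho A a w x \<le> rho A a w u + rho A a u x"
proof -
  have "rho A a w x - cost a vs2 \<le> rho A a w u" if c2: "chain A u x vs2" for vs2
  proof (rule rho_greatest[OF assms(3,4)])
    fix vs1 assume c1: "chain A w u vs1"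
    have "rho A a w x \<le> cost a (vs1 @ vs2)" using rho_lower[OF A a chain_app[OF A c1 c2]] .
    then show "rho A a w x - cost a vs2 \<le> cost a vs1" by (simp add: cost_def)
  qed
  then have "rho A a w x - rho A a w u \<le> rho A a u x"
    using rho_greatest[OF assms(4,5), of "rho A a w x - rho A a w u" a]
    by (smt (verit))
  then show ?thesis by simp
qed

lemma rho_zero_cong:
  assumes A: "alphabet A" and a: "weight a" and ws: "w \<in> infwords A" "w' \<in> infwords A" "u \<in> infwords A" "u' \<in> infwords A"
    and z: "rho A a w w' = 0" "rho A a u u' = 0"
  shows "rho A a w' u' = rho A a w u"
proof -
  have s: "rho A a w' w = 0" "rho A a u' u = 0" using z rho_sym[OF A a] ws by metis+
  have "rho A a w' u' \<le> rho A a w' w + rho A a w u'" using rho_triangle[OF A a] ws by blast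
  also have "rho A a w u' \<le> rho A a w u + rho A a u u'" using rho_triangle[OF A a] ws by blast
  finally have 1: "rho A a w' u' \<le> rho A a w u" using s z by simp
  have "rho A a w u \<le> rho A a w w' + rho A a w' u" using rho_triangle[OF A a] ws by blast
  also have "rho A a w' u \<le> rho A a w' u' + rho A a u' u" using rho_triangle[OF A a] ws by blast
  finally have 2: "rho A a w u \<le> rho A a w' u'" using s z by simp
  show ?thesis using 1 2 by simp
qed


lemma E_mono: "A \<subseteq> A' \<Longrightarrow> E A n \<subseteq> E A' n"
proof (induction A n rule: E.induct)
  case (1 A) then show ?case by simp
next
  case (2 A) then show ?case by auto
next
  case (3 A k) then show ?case by (auto 0 3)
qed

lemma infwords_mono: "A \<subseteq> A' \<Longrightarrow> infwords A \<subseteq> infwords A'"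
  by (auto simp: infwords_def)

lemma cyl_mono: "A \<subseteq> A' \<Longrightarrow> cyl A v \<subseteq> cyl A' v"
  using infwords_mono by (auto simp: cyl_def)

lemma wedge_mono: "A \<subseteq> A' \<Longrightarrow> wedge A v1 v2 \<subseteq> wedge A' v1 v2"
  unfolding wedge_def using cyl_mono[of A A'] E_mono[of A A'] by blast

lemma chain_mono: "A \<subseteq> A' \<Longrightarrow> chain A w u vs \<Longrightarrow> chain A' w u vs"
  unfolding chain_def using cyl_mono[of A A'] wedge_mono[of A A'] by blast

lemma cost_eq: "\<forall>i\<in>A. a' i = a i \<Longrightarrow> \<forall>v\<in>set vs. set v \<subseteq> A \<Longrightarrow> cost a' vs = cost a vs"
proof -
  assume h: "\<forall>i\<in>A. a' i = a i" "\<forall>v\<in>set vs. set v \<subseteq> A"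
  have "Delta a' v = Delta a v" if "v \<in> set vs" for v
  proof -
    have "map a' v = map a v" by (rule map_cong) (use h that in auto)
    then show ?thesis unfolding Delta_def by (rule arg_cong)
  qed
  then have "map (Delta a') vs = map (Delta a) vs" by (intro map_cong) auto
  then show ?thesis unfolding cost_def by (rule arg_cong)
qed

lemma rho_mono:
  assumes A: "alphabet A" "alphabet A'" "A \<subseteq> A'" and a: "weight a" "weight a'" "\<forall>i\<in>A. a' i = a i"
    and w: "w \<in> infwords A" "u \<in> infwords A"
  shows "rho A' a' w u \<le> rho A a w u"
proof (rule rho_greatest[OF w])
  fix vs assume c: "chain A w u vs"
  have "rho A' a' w u \<le> cost a' vs" using rho_lower[OF A(2) a(2) chain_mono[OF A(3) c]] .
  also have "\<dots> = cost a vs" using cost_eq[OF a(3)] c by (simp add: chain_def)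
  finally show "rho A' a' w u \<le> cost a vs" .
qed

definition proj :: "nat set \<Rightarrow> (nat \<Rightarrow> nat) \<Rightarrow> (nat \<Rightarrow> nat)" where
  "proj A z = (if \<exists>k. z k \<notin> A then ext (pref z (LEAST k. z k \<notin> A)) 1 2 else z)"

definition vproj :: "nat set \<Rightarrow> nat \<Rightarrow> nat list \<Rightarrow> nat list" where
  "vproj A m v = (if set v \<subseteq> A then v else takeWhile (\<lambda>c. c \<in> A) v @ 1 # replicate m 2)"

lemma proj_good: "z \<in> infwords A \<Longrightarrow> proj A z = z"
  by (simp add: proj_def infwords_def)

lemma proj_bad: "(\<And>i. i < k \<Longrightarrow> z i \<in> A) \<Longrightarrow> z k \<notin> A \<Longrightarrow> proj A z = ext (pref z k) 1 2"
proof -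
  assume h: "\<And>i. i < k \<Longrightarrow> z i \<in> A" "z k \<notin> A"
  have "(LEAST k. z k \<notin> A) = k"
  proof (rule Least_equality)
    show "z k \<notin> A" by (rule h(2))
    fix y assume "z y \<notin> A" then show "k \<le> y" using h(1) not_le by blast
  qed
  then show ?thesis using h by (auto simp: proj_def)
qed

lemma first_bad:
  assumes "z \<notin> infwords A"
  obtains k where "\<And>i. i < k \<Longrightarrow> z i \<in> A" "z k \<notin> A"
proof -
  have ex: "\<exists>k. z k \<notin> A" using assms by (simp add: infwords_def)
  have 1: "z (LEAST k. z k \<notin> A) \<notin> A" using ex by (rule LeastI_ex)
  have 2: "z i \<in> A" if "i < (LEAST k. z k \<notin> A)" for i using not_less_Least[OF that] by blast
  show ?thesis using that 1 2 by blast
qed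

lemma proj_in:
  assumes A: "alphabet A" shows "proj A z \<in> infwords A"
proof (cases "z \<in> infwords A")
  case True then show ?thesis by (simp add: proj_good)
next
  case False
  then obtain k where k: "\<And>i. i < k \<Longrightarrow> z i \<in> A" "z k \<notin> A" using first_bad by blast
  have "set (pref z k) \<subseteq> A" using k by (auto simp: pref_def)
  then show ?thesis using proj_bad[of k z A, OF k] ext_infwords alphabet_12[OF A] by simp
qed

lemma tw_facts:
  assumes "\<not> set v \<subseteq> A"
  shows "length (takeWhile (\<lambda>c. c \<in> A) v) < length v"
    "v ! length (takeWhile (\<lambda>c. c \<in> A) v) \<notin> A"
    "\<And>i. i < length (takeWhile (\<lambda>c. c \<in> A) v) \<Longrightarrow> v ! i \<in> A"
    "takeWhile (\<lambda>c. c \<in> A) v = take (length (takeWhile (\<lambda>c. c \<in> A) v)) v"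
proof -
  have ne: "takeWhile (\<lambda>c. c \<in> A) v \<noteq> v" using assms by (auto simp: takeWhile_eq_all_conv)
  show l: "length (takeWhile (\<lambda>c. c \<in> A) v) < length v"
  proof (rule ccontr)
    assume "\<not> length (takeWhile (\<lambda>c. c \<in> A) v) < length v"
    then have e: "length (takeWhile (\<lambda>c. c \<in> A) v) = length v"
      using length_takeWhile_le[of "\<lambda>c. c \<in> A" v] by linarith
    have "takeWhile (\<lambda>c. c \<in> A) v = take (length (takeWhile (\<lambda>c. c \<in> A) v)) v"
      by (rule takeWhile_eq_take)
    then have "takeWhile (\<lambda>c. c \<in> A) v = v" unfolding e by simp
    then show False using ne by blast
  qed
  show "v ! length (takeWhile (\<lambda>c. c \<in> A) v) \<notin> A" using nth_length_takeWhile[OF l] by simp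
  show "\<And>i. i < length (takeWhile (\<lambda>c. c \<in> A) v) \<Longrightarrow> v ! i \<in> A"
  proof -
    fix i assume i: "i < length (takeWhile (\<lambda>c. c \<in> A) v)"
    have "takeWhile (\<lambda>c. c \<in> A) v ! i \<in> set (takeWhile (\<lambda>c. c \<in> A) v)" using i by (rule nth_mem)
    then have "takeWhile (\<lambda>c. c \<in> A) v ! i \<in> A" by (rule set_takeWhileD[THEN conjunct2])
    then show "v ! i \<in> A" using takeWhile_nth[OF i] by simp
  qed
  show "takeWhile (\<lambda>c. c \<in> A) v = take (length (takeWhile (\<lambda>c. c \<in> A) v)) v"
    by (rule takeWhile_eq_take)
qed

lemma proj_cyl:
  assumes A: "alphabet A" and z: "z \<in> cyl A' v"
  shows "proj A z \<in> cyl A (vproj A m v)"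
proof (cases "set v \<subseteq> A")
  case True
  have pv: "pref z (length v) = v" using z by (simp add: cyl_iff)
  show ?thesis
  proof (cases "z \<in> infwords A")
    case True then show ?thesis using pv \<open>set v \<subseteq> A\<close> by (simp add: proj_good vproj_def cyl_iff)
  next
    case False
    then obtain k where k: "\<And>i. i < k \<Longrightarrow> z i \<in> A" "z k \<notin> A" using first_bad by blast
    have "k \<ge> length v"
    proof (rule ccontr)
      assume "\<not> k \<ge> length v"
      then have "z k = v ! k" using pv pref_nth[of k "length v" z] by simp
      then show False using k(2) True \<open>\<not> k \<ge> length v\<close> by (metis not_le nth_mem subsetD)
    qed
    then have "pref (proj A z) (length v) = v"
      using proj_bad[of k z A, OF k] pref_ext_short[of "length v" "pref z k" 1 2] pref_take pv by simp
    then show ?thesis using True proj_in[OF A] by (simp add: vproj_def cyl_iff)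
  qed
next
  case False
  define p where "p = takeWhile (\<lambda>c. c \<in> A) v"
  note tw = tw_facts[OF False, folded p_def]
  have pv: "pref z (length v) = v" using z by (simp add: cyl_iff)
  have zi: "z i = v ! i" if "i < length v" for i using pv pref_nth[OF that, of z] by simp
  have k: "\<And>i. i < length p \<Longrightarrow> z i \<in> A" "z (length p) \<notin> A" using tw zi by auto
  have "pref z (length p) = p"
    using pref_take[of "length p" "length v" z] pv tw(1,4) by simp
  then have "proj A z = ext p 1 2" using proj_bad[of "length p" z A, OF k] by simp
  then have "pref (proj A z) (length p + 1 + m) = p @ 1 # replicate m 2" using pref_ext[of p 1 2 m] by simp
  then show ?thesis using False proj_in[OF A] by (simp add: vproj_def cyl_iff p_def)
qed

lemma proj_Tch_aux:
  assumes A: "alphabet A" and r: "set r \<subseteq> A'" "i \<in> A'" "i \<noteq> 1"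
  shows "Tch A (proj A (ext r 1 2)) (proj A (ext r i 1))"
proof (cases "set r \<subseteq> A")
  case True
  have 12: "1 \<in> A" "2 \<in> A" using alphabet_12[OF A] by auto
  have p1: "proj A (ext r 1 2) = ext r 1 2" using proj_good ext_infwords True 12 by blast
  show ?thesis
  proof (cases "i \<in> A")
    case True
    then have "proj A (ext r i 1) = ext r i 1" using proj_good ext_infwords \<open>set r \<subseteq> A\<close> 12 by blast
    then show ?thesis using p1 True \<open>set r \<subseteq> A\<close> r unfolding Tch_def by blast
  next
    case False
    have "proj A (ext r i 1) = ext (pref (ext r i 1) (length r)) 1 2"
      by (rule proj_bad) (use False \<open>set r \<subseteq> A\<close> in \<open>auto simp: ext_def\<close>)
    then show ?thesis using p1 by (simp add: Tch_def)
  qed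
next
  case False
  define p where "p = takeWhile (\<lambda>c. c \<in> A) r"
  note tw = tw_facts[OF False, folded p_def]
  have "proj A (ext r c t) = ext p 1 2" for c t
  proof -
    have "proj A (ext r c t) = ext (pref (ext r c t) (length p)) 1 2"
      by (rule proj_bad) (use tw in \<open>auto simp: ext_def\<close>)
    also have "pref (ext r c t) (length p) = p" using tw by (simp add: pref_ext_short)
    finally show ?thesis .
  qed
  then show ?thesis by (simp add: Tch_def)
qed

lemma proj_Tch:
  assumes A: "alphabet A" and T: "Tch A' z1 z2"
  shows "Tch A (proj A z1) (proj A z2)"
  using T unfolding Tch_def[of A' z1 z2]
proof (elim disjE exE conjE)
  assume "z1 = z2" then show ?thesis by (simp add: Tch_def)
next
  fix r i assume "set r \<subseteq> A'" "i \<in> A'" "i \<noteq> 1" "z1 = ext r 1 2" "z2 = ext r i 1"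
  then show ?thesis using proj_Tch_aux[OF A] by blast
next
  fix r i assume "set r \<subseteq> A'" "i \<in> A'" "i \<noteq> 1" "z1 = ext r i 1" "z2 = ext r 1 2"
  then show ?thesis using proj_Tch_aux[OF A] Tch_sym by blast
qed


lemma vproj_set: "alphabet A \<Longrightarrow> set (vproj A m v) \<subseteq> A"
  using alphabet_12[of A] by (auto simp: vproj_def dest: set_takeWhileD)

lemma vproj_Delta:
  assumes A: "alphabet A" "alphabet A'" and a: "weight a" "weight a'" "\<forall>i\<in>A. a' i = a i"
    and v: "set v \<subseteq> A'"
  shows "Delta a (vproj A m v) \<le> Delta a' v + (1/2)^m"
proof (cases "set v \<subseteq> A")
  case True
  have "Delta a' v = Delta a v" using cost_eq[OF a(3), of "[v]"] True by (simp add: cost_def)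
  then show ?thesis using True by (simp add: vproj_def)
next
  case False
  have "Delta a (vproj A m v) \<le> (1/2)^length (vproj A m v)"
    using Delta_bounds[OF A(1) a(1) vproj_set[OF A(1)]] by blast
  also have "\<dots> \<le> (1/2)^m" using False by (intro power_decreasing) (auto simp: vproj_def)
  also have "\<dots> \<le> Delta a' v + (1/2)^m" using Delta_bounds[OF A(2) a(2) v] by simp
  finally show ?thesis .
qed

lemma sum_list_bound:
  fixes f g :: "'x \<Rightarrow> real"
  assumes "\<forall>x\<in>set xs. f x \<le> g x + e"
  shows "sum_list (map f xs) \<le> sum_list (map g xs) + real (length xs) * e"
  using assms by (induction xs) (auto simp: algebra_simps)

lemma rho_proj_chain:
  assumes A: "alphabet A" "alphabet A'" "A \<subseteq> A'" and a: "weight a" "weight a'" "\<forall>i\<in>A. a' i = a i"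
    and w: "w \<in> infwords A" "u \<in> infwords A" and c: "chain A' w u vs"
  shows "chain A w u (map (vproj A m) vs)"
proof -
  have ne: "vs \<noteq> []" using c by (simp add: chain_def)
  have hd: "w \<in> cyl A (vproj A m (hd vs))"
    using proj_cyl[OF A(1), of w A' "hd vs" m] c proj_good[OF w(1)] by (simp add: chain_def)
  have lst: "u \<in> cyl A (vproj A m (last vs))"
    using proj_cyl[OF A(1), of u A' "last vs" m] c proj_good[OF w(2)] by (simp add: chain_def)
  have wd: "wedge A (vproj A m (vs ! i)) (vproj A m (vs ! Suc i)) \<noteq> {}" if i: "Suc i < length vs" for i
  proof -
    have "wedge A' (vs ! i) (vs ! Suc i) \<noteq> {}" using c i by (simp add: chain_def)
    then obtain z1 z2 where z: "z1 \<in> cyl A' (vs ! i)" "z2 \<in> cyl A' (vs ! Suc i)" "Tch A' z1 z2"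
      using wedge_touch[OF A(2)] by blast
    show ?thesis
      by (rule touch_wedge[OF A(1) proj_cyl[OF A(1) z(1)] proj_cyl[OF A(1) z(2)] proj_Tch[OF A(1) z(3)]])
  qed
  show ?thesis using ne hd lst wd vproj_set[OF A(1)]
    by (auto simp: chain_def hd_map last_map)
qed

lemma rho_proj:
  assumes A: "alphabet A" "alphabet A'" "A \<subseteq> A'" and a: "weight a" "weight a'" "\<forall>i\<in>A. a' i = a i"
    and w: "w \<in> infwords A" "u \<in> infwords A"
  shows "rho A a w u \<le> rho A' a' w u"
proof -
  have wA': "w \<in> infwords A'" "u \<in> infwords A'" using w infwords_mono[OF A(3)] by auto
  have "rho A a w u - e \<le> rho A' a' w u" if e: "e > 0" for e
  proof (rule rho_greatest[OF wA'])
    fix vs assume c: "chain A' w u vs"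
    define N where "N = length vs"
    have "e / (real N + 1) > 0" using e by simp
    then obtain m where m: "(1/2::real)^m < e / (real N + 1)" using real_arch_pow_inv[of _ "1/2"] by auto
    have "rho A a w u \<le> cost a (map (vproj A m) vs)"
      by (rule rho_lower[OF A(1) a(1) rho_proj_chain[OF A a w c]])
    also have "\<dots> \<le> cost a' vs + real N * (1/2)^m"
      unfolding cost_def N_def map_map o_def
      by (rule sum_list_bound) (use vproj_Delta[OF A(1,2) a] c in \<open>auto simp: chain_def\<close>)
    also have "real N * (1/2)^m \<le> e"
    proof -
      have "real N * (1/2)^m \<le> (real N + 1) * (1/2)^m" by simp
      also have "\<dots> \<le> e" using m by (simp add: field_simps)
      finally show ?thesis .
    qed
    finally show "rho A a w u - e \<le> cost a' vs" by simp
  qed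
  note h = this
  show ?thesis
  proof (rule ccontr)
    assume n: "\<not> rho A a w u \<le> rho A' a' w u"
    then have "(rho A a w u - rho A' a' w u) / 2 > 0" by simp
    from h[OF this] show False using n by (simp add: field_simps)
  qed
qed


lemma cls_mem:
  assumes "alphabet A" "weight a" "w \<in> infwords A" shows "w \<in> cls A a w"
  using rho_self[OF assms] assms(3) by (simp add: cls_def)

lemma cls_eq:
  assumes A: "alphabet A" and a: "weight a" and w: "w \<in> infwords A" "u \<in> infwords A"
    and z: "rho A a w u = 0"
  shows "cls A a u = cls A a w"
proof -
  have "rho A a u x = rho A a w x" if x: "x \<in> infwords A" for x
    using rho_zero_cong[OF A a w(1) w(2) x x z rho_self[OF A a x]] .
  then show ?thesis by (auto simp: cls_def)
qed

lemma some_cls: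
  assumes A: "alphabet A" and a: "weight a" and w: "w \<in> infwords A"
  shows "(SOME x. x \<in> cls A a w) \<in> infwords A \<and> rho A a w (SOME x. x \<in> cls A a w) = 0"
proof -
  have "(SOME x. x \<in> cls A a w) \<in> cls A a w" using cls_mem[OF A a w] by (rule someI[where P="\<lambda>x. x \<in> cls A a w"])
  then show ?thesis by (simp add: cls_def)
qed

lemma dT_cls:
  assumes A: "alphabet A" and a: "weight a" and w: "w \<in> infwords A" "u \<in> infwords A"
  shows "dT A a (cls A a w) (cls A a u) = rho A a w u"
proof -
  define s where "s = (SOME x. x \<in> cls A a w)"
  define t where "t = (SOME x. x \<in> cls A a u)"
  have s: "s \<in> infwords A" "rho A a w s = 0" using some_cls[OF A a w(1)] by (simp_all add: s_def)
  have t: "t \<in> infwords A" "rho A a u t = 0" using some_cls[OF A a w(2)] by (simp_all add: t_def)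
  have "dT A a (cls A a w) (cls A a u) = rho A a s t" by (simp add: dT_def s_def t_def)
  also have "\<dots> = rho A a w u" by (rule rho_zero_cong[OF A a w(1) s(1) w(2) t(1) s(2) t(2)])
  finally show ?thesis .
qed

lemma dT_nonneg:
  assumes A: "alphabet A" and a: "weight a" and "C \<in> T A a" "D \<in> T A a"
  shows "0 \<le> dT A a C D"
proof -
  obtain w u where "w \<in> infwords A" "u \<in> infwords A" "C = cls A a w" "D = cls A a u"
    using assms(3,4) by (auto simp: T_def)
  then show ?thesis using dT_cls[OF A a] rho_nonneg[OF A a] by simp
qed

lemma rho_eq:
  assumes A: "alphabet A" "alphabet A'" "A \<subseteq> A'" and a: "weight a" "weight a'" "\<forall>i\<in>A. a' i = a i"
    and w: "w \<in> infwords A" "u \<in> infwords A"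
  shows "rho A' a' w u = rho A a w u"
  using rho_mono[OF assms] rho_proj[OF assms] by (rule antisym)

lemma Phi_cls:
  assumes A: "alphabet A" "alphabet A'" "A \<subseteq> A'" and a: "weight a" "weight a'" "\<forall>i\<in>A. a' i = a i"
    and w: "w \<in> infwords A"
  shows "Phi A' a' (cls A a w) = cls A' a' w"
proof -
  have wA': "w \<in> infwords A'" using w infwords_mono[OF A(3)] by auto
  have "cls A' a' u = cls A' a' w" if u: "u \<in> cls A a w" for u
  proof -
    have uA: "u \<in> infwords A" "rho A a w u = 0" using u by (auto simp: cls_def)
    then have "rho A' a' w u = 0" using rho_eq[OF A a w uA(1)] by simp
    then show ?thesis using cls_eq[OF A(2) a(2) wA'] uA infwords_mono[OF A(3)] by auto
  qed
  note h = this
  have "(\<Union>u\<in>cls A a w. cls A' a' u) = cls A' a' w"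
  proof
    show "(\<Union>u\<in>cls A a w. cls A' a' u) \<subseteq> cls A' a' w" using h by blast
    show "cls A' a' w \<subseteq> (\<Union>u\<in>cls A a w. cls A' a' u)" using cls_mem[OF A(1) a(1) w] by blast
  qed
  then show ?thesis by (simp add: Phi_def)
qed

theorem lemma5p10:
  fixes A A' :: "nat set" and a a' :: "nat \<Rightarrow> real"
  assumes "alphabet A" and "alphabet A'" and "A \<subseteq> A'"
    and "weight a" and "weight a'" and "\<forall>i\<in>A. a' i = a i"
  shows "(\<forall>C\<in>T A a. Phi A' a' C \<in> T A' a')
       \<and> (\<forall>C\<in>T A a. \<forall>D\<in>T A a. dT A' a' (Phi A' a' C) (Phi A' a' D) = dT A a C D)
       \<and> (A \<noteq> A' \<longrightarrow>
            hausdist_on (dT A' a') (Phi A' a' ` T A a) (T A' a') \<le> (SUP j\<in>A' - A. a' j))"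
proof -
  note A = assms(1,2,3) and a = assms(4,5,6)
  note ass = assms
  have mono: "\<And>w. w \<in> infwords A \<Longrightarrow> w \<in> infwords A'" using infwords_mono[OF A(3)] by auto
  have P1: "\<forall>C\<in>T A a. Phi A' a' C \<in> T A' a'"
  proof
    fix C assume "C \<in> T A a"
    then obtain w where w: "w \<in> infwords A" "C = cls A a w" by (auto simp: T_def)
    have "Phi A' a' C = cls A' a' w" using Phi_cls[OF ass w(1)] w(2) by simp
    then show "Phi A' a' C \<in> T A' a'" using mono[OF w(1)] by (simp add: T_def)
  qed
  have P2: "\<forall>C\<in>T A a. \<forall>D\<in>T A a. dT A' a' (Phi A' a' C) (Phi A' a' D) = dT A a C D"
  proof (intro ballI)
    fix C D assume "C \<in> T A a" "D \<in> T A a"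
    then obtain w u where w: "w \<in> infwords A" "u \<in> infwords A" "C = cls A a w" "D = cls A a u"
      by (auto simp: T_def)
    have "dT A' a' (Phi A' a' C) (Phi A' a' D) = dT A' a' (cls A' a' w) (cls A' a' u)"
      using w Phi_cls[OF ass w(1)] Phi_cls[OF ass w(2)] by simp
    also have "\<dots> = rho A' a' w u" by (rule dT_cls[OF A(2) a(2) mono[OF w(1)] mono[OF w(2)]])
    also have "\<dots> = rho A a w u" by (rule rho_eq[OF ass w(1,2)])
    also have "\<dots> = dT A a C D" using dT_cls[OF A(1) a(1) w(1,2)] w(3,4) by simp
    finally show "dT A' a' (Phi A' a' C) (Phi A' a' D) = dT A a C D" .
  qed
  have P3: "hausdist_on (dT A' a') (Phi A' a' ` T A a) (T A' a') \<le> (SUP j\<in>A' - A. a' j)"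
    if ne: "A \<noteq> A'"
  proof -
    define B where "B = (SUP j\<in>A' - A. a' j)"
    define X where "X = Phi A' a' ` T A a"
    define Y where "Y = T A' a'"
    define d where "d = dT A' a'"
    have ne1: "A' - A \<noteq> {}" using ne A(3) by blast
    have bdd: "bdd_above (a' ` (A' - A))"
      by (rule bdd_aboveI[of _ "1/2"]) (use weight_le[OF a(2)] alphabet_pos[OF A(2)] in auto)
    have jB: "a' j \<le> B" if "j \<in> A' - A" for j
      unfolding B_def by (rule cSUP_upper[OF that bdd])
    obtain j0 where j0: "j0 \<in> A' - A" using ne1 by blast
    have B0: "0 \<le> B" using jB[OF j0] weight_pos[OF a(2) alphabet_pos[OF A(2)], of j0] j0 by auto
    have XY: "X \<subseteq> Y" using P1 by (auto simp: X_def Y_def)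
    have one: "(\<lambda>_. 1) \<in> infwords A" using alphabet_12[OF A(1)] by (simp add: infwords_def)
    have Xne: "X \<noteq> {}" using one by (auto simp: X_def T_def)
    have Yne: "Y \<noteq> {}" using one mono by (auto simp: Y_def T_def)
    have dnn: "0 \<le> d x y" if "x \<in> Y" "y \<in> Y" for x y
      using dT_nonneg[OF A(2) a(2)] that by (simp add: d_def Y_def)
    have S1: "(SUP x\<in>X. INF y\<in>Y. d x y) \<le> B"
    proof (rule cSUP_least[OF Xne])
      fix x assume x: "x \<in> X"
      then obtain w where w: "w \<in> infwords A" "x = cls A' a' w"
        using Phi_cls[OF ass] by (auto simp: X_def T_def)
      have "(INF y\<in>Y. d x y) \<le> d x x"
        by (rule cINF_lower) (use x XY dnn in \<open>auto intro!: bdd_belowI[of _ 0]\<close>)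
      also have "d x x = 0" using w dT_cls[OF A(2) a(2)] rho_self[OF A(2) a(2)] mono by (simp add: d_def)
      finally show "(INF y\<in>Y. d x y) \<le> B" using B0 by simp
    qed
    have S2: "(SUP y\<in>Y. INF x\<in>X. d x y) \<le> B"
    proof (rule cSUP_least[OF Yne])
      fix y assume y: "y \<in> Y"
      then obtain z where z: "z \<in> infwords A'" "y = cls A' a' z" by (auto simp: Y_def T_def)
      have bb: "bdd_below ((\<lambda>x. d x y) ` X)"
        by (rule bdd_belowI[of _ 0]) (use y XY dnn in auto)
      have "(INF x\<in>X. d x y) \<le> B + e" if e: "e > 0" for e
      proof (cases "z \<in> infwords A")
        case True
        have "cls A a z \<in> T A a" using True by (simp add: T_def)
        moreover have "y = Phi A' a' (cls A a z)" using Phi_cls[OF ass True] z(2) by simp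
        ultimately have "y \<in> X" unfolding X_def by (rule image_eqI[rotated])
        then have "(INF x\<in>X. d x y) \<le> d y y" by (rule cINF_lower[OF bb])
        also have "d y y = 0" using z dT_cls[OF A(2) a(2)] rho_self[OF A(2) a(2)] by (simp add: d_def)
        finally show ?thesis using B0 e by simp
      next
        case False
        then obtain k where k: "\<And>i. i < k \<Longrightarrow> z i \<in> A" "z k \<notin> A" using first_bad by blast
        define r where "r = pref z k"
        define j where "j = z k"
        have rA: "set r \<subseteq> A" using k by (auto simp: r_def pref_def)
        have jA: "j \<in> A' - A" using k z by (auto simp: j_def infwords_def)
        have j1: "j \<noteq> 1" using jA alphabet_12[OF A(1)] by auto
        define z' where "z' = ext r 1 2"
        have z'A: "z' \<in> infwords A" using rA alphabet_12[OF A(1)] ext_infwords by (simp add: z'_def)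
        have "cls A a z' \<in> T A a" using z'A by (simp add: T_def)
        moreover have "cls A' a' z' = Phi A' a' (cls A a z')" using Phi_cls[OF ass z'A] by simp
        ultimately have xX: "cls A' a' z' \<in> X" unfolding X_def by (rule image_eqI[rotated])
        obtain m where m: "(1/2::real)^m < e" using real_arch_pow_inv[OF e, of "1/2"] by auto
        define v1 where "v1 = pref z' (length r + 1 + m)"
        define v2 where "v2 = pref z (Suc k)"
        have lr: "length r = k" by (simp add: r_def)
        have v2e: "v2 = r @ [j]" by (simp add: v2_def r_def j_def pref_def)
        have c1: "z' \<in> cyl A' v1" using mono[OF z'A] by (simp add: cyl_iff v1_def)
        have c2: "z \<in> cyl A' v2" using z by (simp add: cyl_iff v2_def)
        have c3: "ext r j 1 \<in> cyl A' v2"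
          using pref_ext[of r j 1 0] ext_infwords[of r A' j 1] rA A(3) jA alphabet_12[OF A(2)]
          by (auto simp: cyl_iff v2e)
        have T: "Tch A' z' (ext r j 1)" unfolding Tch_def z'_def using rA A(3) jA j1 by blast
        have wd: "wedge A' v1 v2 \<noteq> {}" by (rule touch_wedge[OF A(2) c1 c3 T])
        have ch: "chain A' z' z [v1, v2]"
          unfolding chain_def
        proof (intro conjI allI impI)
          fix i assume "Suc i < length [v1, v2]"
          then have "i = 0" by simp
          then show "wedge A' ([v1, v2] ! i) ([v1, v2] ! Suc i) \<noteq> {}" using wd by simp
        qed (use c1 c2 cyl_set[OF c1] cyl_set[OF c2] in auto)
        have "rho A' a' z' z \<le> cost a' [v1, v2]" by (rule rho_lower[OF A(2) a(2) ch])
        also have "\<dots> = Delta a' v1 + Delta a' r * a' j"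
          by (simp add: cost_def v2e Delta_def)
        also have "Delta a' v1 \<le> (1/2)^m"
        proof -
          have "Delta a' v1 \<le> (1/2)^(length r + 1 + m)"
            using Delta_bounds[OF A(2) a(2) cyl_set[OF c1]] by (simp add: v1_def)
          also have "\<dots> \<le> (1/2)^m" by (rule power_decreasing) auto
          finally show ?thesis .
        qed
        also have "Delta a' r * a' j \<le> a' j"
        proof -
          have "Delta a' r \<le> (1/2)^length r" using Delta_bounds[OF A(2) a(2), of r] rA A(3) by auto
          moreover have "(1/2::real)^length r \<le> 1" by (simp add: power_le_one)
          ultimately have "Delta a' r \<le> 1" by linarith
          moreover have "0 < a' j" using weight_pos[OF a(2) alphabet_pos[OF A(2)]] jA by auto
          ultimately show ?thesis by (simp add: mult_le_cancel_right1)
        qed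
        finally have "rho A' a' z' z \<le> (1/2)^m + a' j" by simp
        moreover have "d (cls A' a' z') y = rho A' a' z' z"
          using z dT_cls[OF A(2) a(2) mono[OF z'A]] by (simp add: d_def)
        ultimately have "d (cls A' a' z') y \<le> B + e" using m jB[OF jA] by simp
        moreover have "(INF x\<in>X. d x y) \<le> d (cls A' a' z') y" by (rule cINF_lower[OF bb xX])
        ultimately show ?thesis by simp
      qed
      then show "(INF x\<in>X. d x y) \<le> B"
        by (metis add.right_neutral field_le_epsilon)
    qed
    show ?thesis using S1 S2 by (simp add: hausdist_on_def B_def X_def Y_def d_def)
  qed
  show ?thesis using P1 P2 P3 by blast
qed

end
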